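(* For $d>0$ let $\beta_d:\mathbb{R}\setminus 2\pi\mathbb{Z}\to\mathbb{R}$ be the function \[ \beta_{d}(s) = -\frac{s}{d} + \frac{\pi}{d}\coth\Big(\frac{\pi s}{2d}\Big) + \frac{\pi}{d} \sum_{n=1}^{\infty} \frac{2\sinh(\frac{\pi s}{d})}{\cosh(\frac{\pi s}{d})-\cosh(\frac{2\pi^2 n}{d})}. \] Equivalently, writing $x=\pi^2/(2d)$, \[ \pi\beta_d(\pi/2) = 2x\coth(x/2) - x - 4x\sinh(x)\sum_{n=1}^\infty \frac{1}{\cosh(4nx)-\cosh(x)}. \] Then \[ \beta_d(\pi/2)\ \ge\ 1 \qquad\text{for all } d\in(0,\infty). \]
   Context: The function $\beta_d$ is the kernel of the periodic Hilbert transform $\mathcal{C}_d$ on the strip $\{(x,y)\in\mathbb{R}^2: -d<y<0\}$: for a smooth $2\pi$-periodic mean-zero $F:\mathbb{R}\to\mathbb{R}$, $(\mathcal{C}_d F)(x)=\frac{1}{2\pi}\,\mathrm{PV}\int_{-\pi}^{\pi}\beta_d(x-s)F(s)\,ds$, where $\mathcal{C}_d$ maps $\sum_{n\ge1}(a_n\cos nx+b_n\sin nx)$ to $\sum_{n\ge1}(a_n\coth(nd)\sin nx - b_n\coth(nd)\cos nx)$. This interpretation is background only; the claim concerns the explicit formula for $\beta_d$. *)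

theory Defs
  imports "HOL-Analysis.Analysis"
begin

definition coth :: "real \<Rightarrow> real" where
  "coth t = cosh t / sinh t"

text \<open>The kernel beta_d(s) of the periodic Hilbert transform on the strip of depth d,
  for d > 0 and s not in 2 pi Z.\<close>
definition beta :: "real \<Rightarrow> real \<Rightarrow> real" where
  "beta d s = - s / d + (pi / d) * coth (pi * s / (2 * d))
     + (pi / d) * (\<Sum>n. 2 * sinh (pi * s / d) /
          (cosh (pi * s / d) - cosh (2 * pi^2 * real (Suc n) / d)))"

end

theory Submission
  imports Defs "HOL-Complex_Analysis.Complex_Analysis"
begin


definition latt :: "real \<Rightarrow> complex set" where
  "latt T = {u. \<exists>m k::int. u = of_real (of_int m * pi) + \<i> * of_real (of_int k * T)}"

definition pt :: "real \<Rightarrow> complex \<Rightarrow> nat \<Rightarrow> complex" where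
  "pt T u n = cot (u + \<i> * of_real (real (Suc n) * T)) + cot (u - \<i> * of_real (real (Suc n) * T))"

definition Phi :: "real \<Rightarrow> complex \<Rightarrow> complex" where
  "Phi T u = cot u + (\<Sum>n. pt T u n)"

lemma sin_shift_nz:
  assumes "u \<notin> latt T"
  shows "sin (u + \<i> * of_real (of_int k * T)) \<noteq> 0"
proof
  assume "sin (u + \<i> * of_real (of_int k * T)) = 0"
  then obtain m :: int where m: "u + \<i> * of_real (of_int k * T) = of_real (of_int m * pi)"
    by (auto simp: sin_eq_0)
  have "u = of_real (of_int m * pi) + \<i> * of_real (of_int (-k) * T)"
    using m by (simp add: algebra_simps)
  then show False using assms unfolding latt_def by blast
qed

lemma sin_nz: "u \<notin> latt T \<Longrightarrow> sin u \<noteq> 0"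
  using sin_shift_nz[of u T 0] by simp

lemma sin_plus_nz: "u \<notin> latt T \<Longrightarrow> sin (u + \<i> * of_real (real n * T)) \<noteq> 0"
  using sin_shift_nz[of u T "int n"] by simp

lemma sin_minus_nz: "u \<notin> latt T \<Longrightarrow> sin (u - \<i> * of_real (real n * T)) \<noteq> 0"
  using sin_shift_nz[of u T "- int n"] by simp

lemma cot_exp1:
  fixes w :: complex
  assumes "sin w \<noteq> 0"
  shows "cot w = \<i> - 2 * \<i> / (1 - exp (2 * \<i> * w))"
proof -
  define e where "e = exp (\<i> * w)"
  have e0: "e \<noteq> 0" by (simp add: e_def)
  have em: "exp (-(\<i> * w)) = inverse e" by (simp add: e_def exp_minus)
  have e2: "exp (2 * \<i> * w) = e * e"
  proof -
    have "exp (2 * \<i> * w) = exp (2 * (\<i> * w))" by (simp only: mult.assoc)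
    also have "\<dots> = e ^ 2" unfolding e_def by (rule exp_double)
    finally show ?thesis by (simp add: power2_eq_square)
  qed
  have s: "sin w = (e * e - 1) / (2 * \<i> * e)"
  proof -
    have "sin w = (e - inverse e) / (2 * \<i>)" using sin_exp_eq[of w] em by (simp add: e_def)
    also have "e - inverse e = (e * e - 1) / e" using e0 by (simp add: divide_simps)
    finally show ?thesis using e0 by (simp add: field_simps)
  qed
  have c: "cos w = (e * e + 1) / (2 * e)"
  proof -
    have "cos w = (e + inverse e) / 2" using cos_exp_eq[of w] em by (simp add: e_def)
    also have "e + inverse e = (e * e + 1) / e" using e0 by (simp add: divide_simps)
    finally show ?thesis by simp
  qed
  have ee: "e * e - 1 \<noteq> 0" using assms s by auto
  have ee': "1 - e * e \<noteq> 0" using ee by (metis eq_iff_diff_eq_0)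
  have "cot w = ((e * e + 1) / (2 * e)) / ((e * e - 1) / (2 * \<i> * e))"
    unfolding cot_def s c by simp
  also have "\<dots> = \<i> * (e * e + 1) / (e * e - 1)"
    using e0 ee by (simp add: divide_simps)
  also have "\<dots> = \<i> - 2 * \<i> / (1 - e * e)"
    using ee ee' by (simp add: divide_simps) (simp add: algebra_simps)
  finally show ?thesis unfolding e2 .
qed

lemma cot_exp2:
  fixes w :: complex
  assumes "sin w \<noteq> 0"
  shows "cot w = - \<i> + 2 * \<i> / (1 - exp (- 2 * \<i> * w))"
proof -
  have "sin (-w) \<noteq> 0" using assms by simp
  from cot_exp1[OF this] have "cot (-w) = \<i> - 2 * \<i> / (1 - exp (2 * \<i> * (-w)))" .
  moreover have "cot (-w) = - cot w" by (simp add: cot_def)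
  ultimately have "cot w = - (\<i> - 2 * \<i> / (1 - exp (2 * \<i> * (-w))))" by (metis minus_minus)
  then show ?thesis by simp
qed

lemma aux_bound:
  fixes p q :: complex
  assumes "norm p \<le> B" "norm q \<le> B" "B \<le> 1/2"
  shows "norm (2*\<i>/(1-p) - 2*\<i>/(1-q)) \<le> 16*B"
proof -
  have B0: "0 \<le> B" using assms(1) by (meson norm_ge_zero order_trans)
  have p1: "norm (1-p) \<ge> 1/2" using norm_triangle_ineq2[of 1 p] assms by simp
  have q1: "norm (1-q) \<ge> 1/2" using norm_triangle_ineq2[of 1 q] assms by simp
  have pn: "1 - p \<noteq> 0" using p1 by auto
  have qn: "1 - q \<noteq> 0" using q1 by auto
  have eq: "2*\<i>/(1-p) - 2*\<i>/(1-q) = 2*\<i>*(p-q)/((1-p)*(1-q))"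
    using pn qn by (simp add: field_simps)
  have "norm (p - q) \<le> 2*B" using norm_triangle_ineq4[of p q] assms by simp
  then have n1: "norm (2*\<i>*(p-q)) \<le> 4*B" by (simp add: norm_mult)
  have n2: "norm ((1-p)*(1-q)) \<ge> 1/4"
  proof -
    have "(1/2)*(1/2) \<le> norm (1-p) * norm (1-q)"
      using p1 q1 by (intro mult_mono) auto
    then show ?thesis by (simp add: norm_mult)
  qed
  have "norm (2*\<i>*(p-q)/((1-p)*(1-q))) = norm (2*\<i>*(p-q)) / norm ((1-p)*(1-q))"
    by (simp add: norm_divide)
  also have "\<dots> \<le> (4*B) / (1/4)"
    using n1 n2 B0 by (intro frac_le) auto
  finally show ?thesis using eq by simp
qed

lemma pt_alt:
  assumes "sin (u + \<i> * of_real Y) \<noteq> 0" "sin (u - \<i> * of_real Y) \<noteq> 0"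
  shows "cot (u + \<i> * of_real Y) + cot (u - \<i> * of_real Y) =
    2*\<i>/(1 - exp (- 2 * \<i> * (u - \<i> * of_real Y))) - 2*\<i>/(1 - exp (2 * \<i> * (u + \<i> * of_real Y)))"
  using cot_exp1[OF assms(1)] cot_exp2[OF assms(2)] by simp

lemma pair_bound:
  fixes u :: complex and Y :: real
  assumes "sin (u + \<i> * of_real Y) \<noteq> 0" "sin (u - \<i> * of_real Y) \<noteq> 0"
    and "exp (2 * norm u) * exp (-2*Y) \<le> 1/2"
  shows "norm (cot (u + \<i> * of_real Y) + cot (u - \<i> * of_real Y)) \<le> 16 * (exp (2 * norm u) * exp (-2*Y))"
proof -
  define B where "B = exp (2 * norm u) * exp (-2*Y)"
  have iu: "\<bar>Im u\<bar> \<le> norm u" by (rule abs_Im_le_cmod)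
  have "norm (exp (- 2 * \<i> * (u - \<i> * of_real Y))) = exp (2 * Im u - 2 * Y)"
    by simp
  also have "\<dots> = exp (2 * Im u) * exp (-2*Y)" by (simp add: exp_add[symmetric])
  also have "\<dots> \<le> B" unfolding B_def using iu by (intro mult_right_mono) auto
  finally have p: "norm (exp (- 2 * \<i> * (u - \<i> * of_real Y))) \<le> B" .
  have "norm (exp (2 * \<i> * (u + \<i> * of_real Y))) = exp (- 2 * Im u - 2 * Y)"
    by simp
  also have "\<dots> = exp (- 2 * Im u) * exp (-2*Y)" by (simp add: exp_add[symmetric])
  also have "\<dots> \<le> B" unfolding B_def using iu by (intro mult_right_mono) auto
  finally have q: "norm (exp (2 * \<i> * (u + \<i> * of_real Y))) \<le> B" .
  show ?thesis unfolding pt_alt[OF assms(1,2)] B_def[symmetric]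
    by (rule aux_bound[OF p q]) (use assms(3) B_def in auto)
qed

lemma pt_holo:
  assumes "\<And>u. u \<in> S \<Longrightarrow> sin (u + \<i> * of_real (real (Suc n) * T)) \<noteq> 0 \<and> sin (u - \<i> * of_real (real (Suc n) * T)) \<noteq> 0"
  shows "(\<lambda>u. pt T u n) holomorphic_on S"
  unfolding pt_def cot_def by (intro holomorphic_intros) (use assms in auto)

lemma ptsum_holo:
  assumes T: "T > 0" and S: "open S"
    and nz: "\<And>u n. u \<in> S \<Longrightarrow> sin (u + \<i> * of_real (real (Suc n) * T)) \<noteq> 0 \<and> sin (u - \<i> * of_real (real (Suc n) * T)) \<noteq> 0"
  shows "(\<lambda>u. \<Sum>n. pt T u n) holomorphic_on S" "\<And>u. u \<in> S \<Longrightarrow> summable (pt T u)"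
proof -
  have hfd: "((\<lambda>u. pt T u n) has_field_derivative deriv (\<lambda>u. pt T u n) x) (at x)" if "x \<in> S" for n x
  proof -
    have "(\<lambda>u. pt T u n) holomorphic_on S" using nz by (intro pt_holo) auto
    then have "(\<lambda>u. pt T u n) field_differentiable (at x)"
      using S that holomorphic_on_imp_differentiable_at by blast
    then show ?thesis using field_differentiable_derivI by blast
  qed
  have to_g: "\<exists>d h. 0 < d \<and> summable h \<and> (\<forall>\<^sub>F n in sequentially. \<forall>y\<in>ball x d \<inter> S. norm (pt T y n) \<le> h n)"
    if "x \<in> S" for x
  proof -
    define R where "R = norm x + 1"
    define c where "c = exp (-2*T)"
    define h where "h n = 16 * (exp (2*R) * exp (-2 * (real (Suc n) * T)))" for n
    have c0: "0 < c" "c < 1" using T by (auto simp: c_def)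
    have geo: "exp (-2 * (real (Suc n) * T)) = c ^ Suc n" for n
      unfolding c_def exp_of_nat_mult[symmetric] by (simp add: algebra_simps)
    have h_eq: "h = (\<lambda>n. (16 * exp (2*R) * c) * c ^ n)"
      unfolding h_def geo by (auto simp: algebra_simps)
    have "summable h" unfolding h_eq
      by (intro summable_mult summable_geometric) (use c0 in auto)
    have "(\<lambda>n. (exp (2*R) * c) * c ^ n) \<longlonglongrightarrow> (exp (2*R) * c) * 0"
      by (intro tendsto_mult tendsto_const LIMSEQ_power_zero) (use c0 in auto)
    then have "\<forall>\<^sub>F n in sequentially. (exp (2*R) * c) * c ^ n < 1/2"
      by (intro order_tendstoD(2)) auto
    then have ev: "\<forall>\<^sub>F n in sequentially. exp (2*R) * exp (-2 * (real (Suc n) * T)) < 1/2"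
      unfolding geo by (simp add: algebra_simps)
    have "\<forall>\<^sub>F n in sequentially. \<forall>y\<in>ball x 1 \<inter> S. norm (pt T y n) \<le> h n"
      using ev
    proof eventually_elim
      case (elim n)
      show ?case
      proof
        fix y assume y: "y \<in> ball x 1 \<inter> S"
        have "norm y \<le> R" using y norm_triangle_ineq2[of y x] unfolding R_def
          by (auto simp: dist_norm norm_minus_commute)
        then have ey: "exp (2 * norm y) \<le> exp (2 * R)" by simp
        have le: "exp (2 * norm y) * exp (-2 * (real (Suc n) * T)) \<le> exp (2*R) * exp (-2 * (real (Suc n) * T))"
          using ey by (intro mult_right_mono) auto
        have "norm (pt T y n) \<le> 16 * (exp (2 * norm y) * exp (-2 * (real (Suc n) * T)))"
        proof -
          have "exp (2 * norm y) * exp (-2 * (real (Suc n) * T)) \<le> 1/2" using le elim by linarith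
          then show ?thesis unfolding pt_def using nz[of y n] y by (intro pair_bound) auto
        qed
        also have "\<dots> \<le> h n" unfolding h_def using le by simp
        finally show "norm (pt T y n) \<le> h n" .
      qed
    qed
    then show ?thesis using \<open>summable h\<close> by (intro exI[of _ 1] exI[of _ h]) auto
  qed
  obtain g g' where gg: "\<And>x. x \<in> S \<Longrightarrow> (pt T x sums g x) \<and> ((\<lambda>n. deriv (\<lambda>u. pt T u n) x) sums g' x) \<and> (g has_field_derivative g' x) (at x)"
    using series_and_derivative_comparison_local[OF S hfd to_g] by blast
  show "\<And>u. u \<in> S \<Longrightarrow> summable (pt T u)" using gg sums_summable by blast
  have "g holomorphic_on S" unfolding holomorphic_on_open[OF S] using gg by blast
  then show "(\<lambda>u. \<Sum>n. pt T u n) holomorphic_on S"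
    by (rule holomorphic_transform) (use gg sums_unique in metis)
qed

lemma latt_closed:
  assumes "T > 0"
  shows "closed (latt T)"
proof -
  have "latt T = {u. sin (Re u) = 0 \<and> sin (pi * Im u / T) = 0}"
  proof (intro set_eqI iffI)
    fix u assume "u \<in> latt T"
    then obtain m k :: int where u: "u = of_real (of_int m * pi) + \<i> * of_real (of_int k * T)"
      unfolding latt_def by blast
    have "Re u = of_int m * pi" "pi * Im u / T = of_int k * pi" using assms by (auto simp: u)
    then show "u \<in> {u. sin (Re u) = 0 \<and> sin (pi * Im u / T) = 0}"
      by (simp add: sin_zero_iff_int2)
  next
    fix u assume "u \<in> {u. sin (Re u) = 0 \<and> sin (pi * Im u / T) = 0}"
    then obtain m k :: int where m: "Re u = of_int m * pi" and k: "pi * Im u / T = of_int k * pi"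
      by (auto simp: sin_zero_iff_int2)
    have "Im u = of_int k * T" using k assms by (simp add: field_simps)
    then have "u = of_real (of_int m * pi) + \<i> * of_real (of_int k * T)"
      using m by (simp add: complex_eq_iff)
    then show "u \<in> latt T" unfolding latt_def by blast
  qed
  moreover have "closed {u. sin (Re u) = 0 \<and> sin (pi * Im u / T) = 0}"
    by (intro closed_Collect_conj closed_Collect_eq continuous_intros) (use assms in auto)
  ultimately show ?thesis by simp
qed

lemma Phi_holo:
  assumes "T > 0"
  shows "Phi T holomorphic_on (- latt T)" "\<And>u. u \<notin> latt T \<Longrightarrow> summable (pt T u)"
proof -
  have op: "open (- latt T)" using latt_closed[OF assms] by auto
  have nz: "\<And>u n. u \<in> - latt T \<Longrightarrow> sin (u + \<i> * of_real (real (Suc n) * T)) \<noteq> 0 \<and> sin (u - \<i> * of_real (real (Suc n) * T)) \<noteq> 0"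
    by (rule conjI[OF sin_plus_nz sin_minus_nz]) auto
  note h = ptsum_holo[OF assms op nz]
  show "\<And>u. u \<notin> latt T \<Longrightarrow> summable (pt T u)" using h(2) by auto
  have "cot holomorphic_on (- latt T)" unfolding cot_def
    by (intro holomorphic_intros) (use sin_nz in auto)
  then show "Phi T holomorphic_on (- latt T)"
    unfolding Phi_def[abs_def] by (intro holomorphic_intros h(1))
qed

lemma cot_plus_pi: "cot (z + of_real pi) = cot (z::complex)"
  by (simp add: cot_def sin_add cos_add)

lemma cot_minus: "cot (- z) = - cot (z::complex)"
  by (simp add: cot_def)

lemma Phi_plus_pi: "Phi T (u + of_real pi) = Phi T u"
proof -
  have "pt T (u + of_real pi) n = pt T u n" for n
  proof -
    have a: "u + of_real pi + \<i> * of_real (real (Suc n) * T) = (u + \<i> * of_real (real (Suc n) * T)) + of_real pi"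
      by (simp add: algebra_simps)
    have b: "u + of_real pi - \<i> * of_real (real (Suc n) * T) = (u - \<i> * of_real (real (Suc n) * T)) + of_real pi"
      by (simp add: algebra_simps)
    show ?thesis unfolding pt_def a b cot_plus_pi ..
  qed
  then have "pt T (u + of_real pi) = pt T u" by (rule ext)
  then show ?thesis unfolding Phi_def cot_plus_pi by (simp only:)
qed

lemma latt_uminus: "- u \<in> latt T \<longleftrightarrow> u \<in> latt T"
proof -
  have *: "- u \<in> latt T" if h: "u \<in> latt T" for u
  proof -
    obtain m k :: int where "u = of_real (of_int m * pi) + \<i> * of_real (of_int k * T)"
      using h unfolding latt_def by blast
    then have "- u = of_real (of_int (-m) * pi) + \<i> * of_real (of_int (-k) * T)" by simp
    then show ?thesis unfolding latt_def by blast
  qed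
  show ?thesis using *[of u] *[of "-u"] by auto
qed

lemma Phi_uminus:
  assumes "T > 0" "u \<notin> latt T"
  shows "Phi T (- u) = - Phi T u"
proof -
  have "pt T (- u) n = - pt T u n" for n
  proof -
    have a: "- u + \<i> * of_real (real (Suc n) * T) = - (u - \<i> * of_real (real (Suc n) * T))" by simp
    have b: "- u - \<i> * of_real (real (Suc n) * T) = - (u + \<i> * of_real (real (Suc n) * T))" by simp
    show ?thesis unfolding pt_def a b cot_minus by simp
  qed
  then have "(\<Sum>n. pt T (- u) n) = (\<Sum>n. - pt T u n)" by simp
  also have "\<dots> = - (\<Sum>n. pt T u n)" using Phi_holo(2)[OF assms] by (rule suminf_minus)
  finally show ?thesis unfolding Phi_def cot_minus by simp
qed

lemma exp_seq_0:
  assumes "T > 0"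
  shows "(\<lambda>N. exp (a - 2 * (real N * T))) \<longlonglongrightarrow> 0"
proof -
  have eq: "exp (a - 2 * (real N * T)) = exp a * exp (-2*T) ^ N" for N
    by (simp add: exp_diff exp_minus exp_of_nat_mult[symmetric] field_simps)
  have "(\<lambda>N. exp a * exp (-2*T) ^ N) \<longlonglongrightarrow> exp a * 0"
    by (intro tendsto_mult tendsto_const LIMSEQ_power_zero) (use assms in auto)
  then show ?thesis unfolding eq by simp
qed

lemma latt_add_mem: "u \<in> latt T \<Longrightarrow> v \<in> latt T \<Longrightarrow> u + v \<in> latt T"
proof -
  assume "u \<in> latt T" "v \<in> latt T"
  then obtain m k m' k' :: int where "u = of_real (of_int m * pi) + \<i> * of_real (of_int k * T)"
    "v = of_real (of_int m' * pi) + \<i> * of_real (of_int k' * T)" unfolding latt_def by blast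
  then have "u + v = of_real (of_int (m + m') * pi) + \<i> * of_real (of_int (k + k') * T)"
    by (simp add: algebra_simps)
  then show ?thesis unfolding latt_def by blast
qed

lemma latt_add: "v \<in> latt T \<Longrightarrow> (u + v \<in> latt T \<longleftrightarrow> u \<in> latt T)"
proof
  assume v: "v \<in> latt T" and "u + v \<in> latt T"
  then have "(u + v) + (- v) \<in> latt T" using latt_uminus latt_add_mem by blast
  then show "u \<in> latt T" by simp
qed (rule latt_add_mem)

lemma latt_pi: "of_real pi \<in> latt T"
  unfolding latt_def by (rule CollectI, rule exI[of _ 1], rule exI[of _ 0]) simp

lemma latt_iT: "\<i> * of_real T \<in> latt T"
  unfolding latt_def by (rule CollectI, rule exI[of _ 0], rule exI[of _ 1]) simp

lemma cot_up_lim: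
  assumes "T > 0" "u \<notin> latt T"
  shows "(\<lambda>N. cot (u + \<i> * of_real (real (Suc N) * T))) \<longlonglongrightarrow> - \<i>"
proof -
  have eq: "cot (u + \<i> * of_real (real (Suc N) * T)) = \<i> - 2 * \<i> / (1 - exp (2 * \<i> * (u + \<i> * of_real (real (Suc N) * T))))" for N
    by (rule cot_exp1, rule sin_plus_nz[OF assms(2)])
  have "(\<lambda>N. exp ((- 2 * Im u - 2 * T) - 2 * (real N * T))) \<longlonglongrightarrow> 0"
    by (rule exp_seq_0[OF assms(1)])
  moreover have "norm (exp (2 * \<i> * (u + \<i> * of_real (real (Suc N) * T)))) = exp ((- 2 * Im u - 2 * T) - 2 * (real N * T))" for N
  proof -
    have "Re (2 * \<i> * (u + \<i> * of_real (real (Suc N) * T))) = (- 2 * Im u - 2 * T) - 2 * (real N * T)"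
    proof -
      have "2 * \<i> * (u + \<i> * of_real (real (Suc N) * T)) = 2 * \<i> * u - of_real (2 * (real (Suc N) * T))"
        by (simp add: algebra_simps)
      then show ?thesis by (simp add: algebra_simps)
    qed
    then show ?thesis by (metis norm_exp_eq_Re)
  qed
  ultimately have "(\<lambda>N. norm (exp (2 * \<i> * (u + \<i> * of_real (real (Suc N) * T))))) \<longlonglongrightarrow> 0"
    by (simp only:)
  then have "(\<lambda>N. exp (2 * \<i> * (u + \<i> * of_real (real (Suc N) * T)))) \<longlonglongrightarrow> 0"
    by (rule tendsto_norm_zero_cancel)
  then have "(\<lambda>N. \<i> - 2 * \<i> / (1 - exp (2 * \<i> * (u + \<i> * of_real (real (Suc N) * T))))) \<longlonglongrightarrow> \<i> - 2 * \<i> / (1 - 0)"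
    by (intro tendsto_intros) auto
  then show ?thesis unfolding eq by simp
qed

lemma cot_down_lim:
  assumes "T > 0" "u \<notin> latt T"
  shows "(\<lambda>N. cot (u - \<i> * of_real (real N * T))) \<longlonglongrightarrow> \<i>"
proof -
  have eq: "cot (u - \<i> * of_real (real N * T)) = - \<i> + 2 * \<i> / (1 - exp (- 2 * \<i> * (u - \<i> * of_real (real N * T))))" for N
    by (rule cot_exp2, rule sin_minus_nz[OF assms(2)])
  have "(\<lambda>N. exp ((2 * Im u) - 2 * (real N * T))) \<longlonglongrightarrow> 0"
    by (rule exp_seq_0[OF assms(1)])
  moreover have "norm (exp (- 2 * \<i> * (u - \<i> * of_real (real N * T)))) = exp ((2 * Im u) - 2 * (real N * T))" for N
  proof -
    have "Re (- 2 * \<i> * (u - \<i> * of_real (real N * T))) = (2 * Im u) - 2 * (real N * T)"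
    proof -
      have "- 2 * \<i> * (u - \<i> * of_real (real N * T)) = - 2 * \<i> * u - of_real (2 * (real N * T))"
        by (simp add: algebra_simps)
      then show ?thesis by (simp add: algebra_simps)
    qed
    then show ?thesis by (metis norm_exp_eq_Re)
  qed
  ultimately have "(\<lambda>N. norm (exp (- 2 * \<i> * (u - \<i> * of_real (real N * T))))) \<longlonglongrightarrow> 0"
    by (simp only:)
  then have "(\<lambda>N. exp (- 2 * \<i> * (u - \<i> * of_real (real N * T)))) \<longlonglongrightarrow> 0"
    by (rule tendsto_norm_zero_cancel)
  then have "(\<lambda>N. - \<i> + 2 * \<i> / (1 - exp (- 2 * \<i> * (u - \<i> * of_real (real N * T))))) \<longlonglongrightarrow> - \<i> + 2 * \<i> / (1 - 0)"
    by (intro tendsto_intros) auto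
  then show ?thesis unfolding eq by simp
qed

lemma Phi_shift:
  assumes T: "T > 0" and u: "u \<notin> latt T"
  shows "Phi T (u + \<i> * of_real T) = Phi T u - 2 * \<i>"
proof -
  have u': "u + \<i> * of_real T \<notin> latt T" using u latt_add[OF latt_iT] by blast
  define c where "c r = cot (u + \<i> * of_real r)" for r
  define A where "A N = cot u + (\<Sum>n<N. pt T u n)" for N
  define B where "B N = cot (u + \<i> * of_real T) + (\<Sum>n<N. pt T (u + \<i> * of_real T) n)" for N
  have pt_u: "pt T u n = c (real (Suc n) * T) + c (- (real (Suc n) * T))" for n
    unfolding pt_def c_def by simp
  have pt_v: "pt T (u + \<i> * of_real T) n = c (real (Suc (Suc n)) * T) + c (- (real n * T))" for n
  proof -
    have a: "u + \<i> * of_real T + \<i> * of_real (real (Suc n) * T) = u + \<i> * of_real (real (Suc (Suc n)) * T)"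
      by (simp add: algebra_simps)
    have b: "u + \<i> * of_real T - \<i> * of_real (real (Suc n) * T) = u + \<i> * of_real (- (real n * T))"
      by (simp add: algebra_simps)
    show ?thesis unfolding pt_def c_def a b ..
  qed
  have claim: "B N = A N + c (real (Suc N) * T) - c (- (real N * T))" for N
  proof (induction N)
    case 0
    then show ?case unfolding A_def B_def c_def by simp
  next
    case (Suc N)
    have "B (Suc N) = B N + pt T (u + \<i> * of_real T) N" unfolding B_def by simp
    moreover have "A (Suc N) = A N + pt T u N" unfolding A_def by simp
    ultimately show ?case using Suc.IH unfolding pt_u pt_v by (simp add: algebra_simps)
  qed
  have "A \<longlonglongrightarrow> Phi T u" unfolding A_def[abs_def] Phi_def
    by (intro tendsto_add tendsto_const summable_LIMSEQ Phi_holo(2) T u)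
  moreover have "B \<longlonglongrightarrow> Phi T (u + \<i> * of_real T)" unfolding B_def[abs_def] Phi_def
    by (intro tendsto_add tendsto_const summable_LIMSEQ Phi_holo(2) T u')
  moreover have "(\<lambda>N. c (real (Suc N) * T)) \<longlonglongrightarrow> - \<i>"
    unfolding c_def by (rule cot_up_lim[OF T u])
  moreover have "(\<lambda>N. c (- (real N * T))) \<longlonglongrightarrow> \<i>"
    unfolding c_def using cot_down_lim[OF T u] by simp
  ultimately have "B \<longlonglongrightarrow> Phi T u + (- \<i>) - \<i>"
    unfolding claim[abs_def] by (intro tendsto_intros)
  moreover note \<open>B \<longlonglongrightarrow> Phi T (u + \<i> * of_real T)\<close>
  ultimately have "Phi T (u + \<i> * of_real T) = Phi T u + (- \<i>) - \<i>"
    using LIMSEQ_unique by blast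
  then show ?thesis by simp
qed

lemma u_cot_lim: "((\<lambda>u::complex. u * cot u) \<longlongrightarrow> 1) (at 0)"
proof -
  have "((\<lambda>y. (sin y - sin 0) / (y - 0)) \<longlongrightarrow> cos 0) (at (0::complex))"
    using DERIV_sin[of "0::complex"] unfolding has_field_derivative_iff .
  then have s: "((\<lambda>y::complex. sin y / y) \<longlongrightarrow> 1) (at 0)" by simp
  have "((\<lambda>y::complex. cos y * inverse (sin y / y)) \<longlongrightarrow> cos 0 * inverse 1) (at 0)"
    by (rule tendsto_mult, rule tendsto_cos, rule tendsto_ident_at, rule tendsto_inverse[OF s]) simp
  then have l: "((\<lambda>y::complex. cos y * inverse (sin y / y)) \<longlongrightarrow> 1) (at 0)" by simp
  have "\<forall>\<^sub>F y in at (0::complex). cos y * inverse (sin y / y) = y * cot y"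
    unfolding cot_def inverse_divide by (intro always_eventually allI) (simp only: times_divide_eq_right mult.commute)
  then show ?thesis by (rule Lim_transform_eventually[OF l])
qed
lemma ptsum_holo_ball:
  assumes T: "T > 0"
  shows "(\<lambda>u. \<Sum>n. pt T u n) holomorphic_on ball 0 T"
proof (rule ptsum_holo(1)[OF T open_ball])
  fix u n assume u: "u \<in> ball (0::complex) T"
  have iu: "\<bar>Im u\<bar> < T" using u abs_Im_le_cmod[of u] by (simp add: dist_norm) 
  have Y: "T \<le> real (Suc n) * T" using T by simp
  have re: "sin z \<noteq> 0" if "Im z \<noteq> 0" for z :: complex
  proof
    assume "sin z = 0"
    then obtain m :: int where "z = of_real (of_int m * pi)" by (auto simp: sin_eq_0)
    then show False using that by simp
  qed
  show "sin (u + \<i> * of_real (real (Suc n) * T)) \<noteq> 0 \<and> sin (u - \<i> * of_real (real (Suc n) * T)) \<noteq> 0"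
    using iu Y by (intro conjI re) auto
qed

lemma u_Phi_lim:
  assumes T: "T > 0"
  shows "((\<lambda>u. u * Phi T u) \<longlongrightarrow> 1) (at 0)"
proof -
  define ps where "ps u = (\<Sum>n. pt T u n)" for u
  have "continuous_on (ball 0 T) ps" unfolding ps_def
    using ptsum_holo_ball[OF T] holomorphic_on_imp_continuous_on by blast
  moreover have "0 \<in> ball (0::complex) T" using T by simp
  ultimately have "isCont ps 0" using continuous_on_eq_continuous_at[OF open_ball] by blast
  then have "(ps \<longlongrightarrow> ps 0) (at 0)" using isCont_def by blast
  then have "((\<lambda>u. u * cot u + u * ps u) \<longlongrightarrow> 1 + 0 * ps 0) (at 0)"
    by (intro tendsto_intros u_cot_lim) auto
  then show ?thesis unfolding Phi_def ps_def by (simp add: algebra_simps)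
qed

definition Lset :: "real \<Rightarrow> complex set" where
  "Lset d = {z. \<exists>m k::int. z = of_real (of_int m * (2*pi)) + \<i> * of_real (of_int k * (2*d))}"

definition wf :: "real \<Rightarrow> complex \<Rightarrow> complex" where
  "wf d z = \<i> * of_real pi * z / (2 * of_real d)"

definition Hf :: "real \<Rightarrow> complex \<Rightarrow> complex" where
  "Hf d z = Phi d (z / 2)"

definition Gf :: "real \<Rightarrow> complex \<Rightarrow> complex" where
  "Gf d z = - z / of_real d + (\<i> * of_real pi / of_real d) * Phi (pi^2/d) (wf d z)"

definition Df :: "real \<Rightarrow> complex \<Rightarrow> complex" where
  "Df d z = Gf d z - Hf d z"

lemma L_half: "z \<in> Lset d \<longleftrightarrow> z / 2 \<in> latt d"
proof
  assume "z \<in> Lset d"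
  then obtain m k :: int where z: "z = of_real (of_int m * (2*pi)) + \<i> * of_real (of_int k * (2*d))"
    unfolding Lset_def by blast
  have "z / 2 = of_real (of_int m * pi) + \<i> * of_real (of_int k * d)"
    unfolding z by (simp add: field_simps)
  then show "z / 2 \<in> latt d" unfolding latt_def by blast
next
  assume "z / 2 \<in> latt d"
  then obtain m k :: int where z: "z / 2 = of_real (of_int m * pi) + \<i> * of_real (of_int k * d)"
    unfolding latt_def by blast
  have "z = 2 * (z / 2)" by simp
  also have "\<dots> = of_real (of_int m * (2*pi)) + \<i> * of_real (of_int k * (2*d))"
    unfolding z by (simp add: field_simps)
  finally show "z \<in> Lset d" unfolding Lset_def by blast
qed

lemma L_rot:
  assumes d: "d > 0"
  shows "z \<in> Lset d \<longleftrightarrow> wf d z \<in> latt (pi^2/d)"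
proof
  assume "z \<in> Lset d"
  then obtain m k :: int where z: "z = of_real (of_int m * (2*pi)) + \<i> * of_real (of_int k * (2*d))"
    unfolding Lset_def by blast
  have "wf d z = of_real (of_int (-k) * pi) + \<i> * of_real (of_int m * (pi^2/d))"
    unfolding z wf_def using d by (simp add: field_simps power2_eq_square)
  then show "wf d z \<in> latt (pi^2/d)" unfolding latt_def by blast
next
  assume "wf d z \<in> latt (pi^2/d)"
  then obtain m k :: int where w: "wf d z = of_real (of_int m * pi) + \<i> * of_real (of_int k * (pi^2/d))"
    unfolding latt_def by blast
  have "z = (2 * of_real d / (\<i> * of_real pi)) * wf d z"
    unfolding wf_def using d by (simp add: field_simps)
  also have "\<dots> = of_real (of_int k * (2*pi)) + \<i> * of_real (of_int (-m) * (2*d))"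
    unfolding w using d by (simp add: field_simps power2_eq_square)
  finally show "z \<in> Lset d" unfolding Lset_def by blast
qed


lemma L_2pi: "z + 2 * of_real pi \<in> Lset d \<longleftrightarrow> z \<in> Lset d"
proof -
  have e: "(z + 2 * of_real pi) / 2 = z / 2 + of_real pi" by simp
  show ?thesis unfolding L_half e by (rule latt_add[OF latt_pi[of d]])
qed

lemma L_2id: "z + 2 * \<i> * of_real d \<in> Lset d \<longleftrightarrow> z \<in> Lset d"
proof -
  have e: "(z + 2 * \<i> * of_real d) / 2 = z / 2 + \<i> * of_real d" by simp
  show ?thesis unfolding L_half e by (rule latt_add[OF latt_iT[of d]])
qed

lemma L_uminus: "- z \<in> Lset d \<longleftrightarrow> z \<in> Lset d"
proof -
  have "(- z) / 2 = - (z / 2)" by simp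
  then show ?thesis unfolding L_half using latt_uminus[of "z/2" d] by simp
qed

lemma Hf_2pi: "Hf d (z + 2 * of_real pi) = Hf d z"
proof -
  have e: "(z + 2 * of_real pi) / 2 = z / 2 + of_real pi" by simp
  show ?thesis unfolding Hf_def e by (rule Phi_plus_pi)
qed

lemma Hf_2id:
  assumes "d > 0" "z \<notin> Lset d"
  shows "Hf d (z + 2 * \<i> * of_real d) = Hf d z - 2 * \<i>"
proof -
  have e: "(z + 2 * \<i> * of_real d) / 2 = z / 2 + \<i> * of_real d" by simp
  have "z / 2 \<notin> latt d" using assms(2) L_half by blast
  then show ?thesis unfolding Hf_def e by (rule Phi_shift[OF assms(1)])
qed

lemma Hf_uminus:
  assumes "d > 0" "z \<notin> Lset d"
  shows "Hf d (- z) = - Hf d z"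
proof -
  have "(- z) / 2 = - (z / 2)" by simp
  moreover have "z / 2 \<notin> latt d" using assms(2) L_half by blast
  ultimately show ?thesis unfolding Hf_def using Phi_uminus[OF assms(1)] by simp
qed

lemma Gf_2pi:
  assumes d: "d > 0" and z: "z \<notin> Lset d"
  shows "Gf d (z + 2 * of_real pi) = Gf d z"
proof -
  have T: "pi^2/d > 0" using d by simp
  have w: "wf d z \<notin> latt (pi^2/d)" using z L_rot[OF d] by blast
  have "wf d (z + 2 * of_real pi) = wf d z + \<i> * of_real (pi^2/d)"
    unfolding wf_def using d by (simp add: field_simps power2_eq_square)
  then have h: "Phi (pi^2/d) (wf d (z + 2 * of_real pi)) = Phi (pi^2/d) (wf d z) - 2 * \<i>"
    using Phi_shift[OF T w] by simp
  show ?thesis unfolding Gf_def h using d by (simp add: field_simps)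
qed

lemma Gf_2id:
  assumes d: "d > 0"
  shows "Gf d (z + 2 * \<i> * of_real d) = Gf d z - 2 * \<i>"
proof -
  have "wf d (z + 2 * \<i> * of_real d) = (wf d z - of_real pi)"
    unfolding wf_def using d by (simp add: field_simps)
  moreover have "Phi (pi^2/d) (wf d z - of_real pi) = Phi (pi^2/d) (wf d z)"
    using Phi_plus_pi[of "pi^2/d" "wf d z - of_real pi"] by simp
  ultimately have h: "Phi (pi^2/d) (wf d (z + 2 * \<i> * of_real d)) = Phi (pi^2/d) (wf d z)" by simp
  show ?thesis unfolding Gf_def h using d by (simp add: field_simps)
qed

lemma Gf_uminus:
  assumes d: "d > 0" and z: "z \<notin> Lset d"
  shows "Gf d (- z) = - Gf d z"
proof -
  have T: "pi^2/d > 0" using d by simp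
  have w: "wf d z \<notin> latt (pi^2/d)" using z L_rot[OF d] by blast
  have "wf d (- z) = - wf d z" unfolding wf_def by simp
  then have h: "Phi (pi^2/d) (wf d (- z)) = - Phi (pi^2/d) (wf d z)"
    using Phi_uminus[OF T w] by simp
  show ?thesis unfolding Gf_def h by (simp add: field_simps)
qed

lemma Df_2pi: "d > 0 \<Longrightarrow> z \<notin> Lset d \<Longrightarrow> Df d (z + 2 * of_real pi) = Df d z"
  unfolding Df_def using Gf_2pi Hf_2pi by simp

lemma Df_2id: "d > 0 \<Longrightarrow> z \<notin> Lset d \<Longrightarrow> Df d (z + 2 * \<i> * of_real d) = Df d z"
  unfolding Df_def using Gf_2id Hf_2id by simp

lemma Df_uminus: "d > 0 \<Longrightarrow> z \<notin> Lset d \<Longrightarrow> Df d (- z) = - Df d z"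
  unfolding Df_def using Gf_uminus Hf_uminus by simp

lemma Df_holo:
  assumes d: "d > 0"
  shows "Df d holomorphic_on (- Lset d)"
proof -
  have T: "pi^2/d > 0" using d by simp
  have h1: "(Phi d \<circ> (\<lambda>z. z / 2)) holomorphic_on (- Lset d)"
    by (rule holomorphic_on_compose_gen[OF _ Phi_holo(1)[OF d]])
       (auto intro!: holomorphic_intros simp: L_half)
  have h2: "(Phi (pi^2/d) \<circ> wf d) holomorphic_on (- Lset d)"
    by (rule holomorphic_on_compose_gen[OF _ Phi_holo(1)[OF T]])
       (auto intro!: holomorphic_intros simp: wf_def[abs_def] L_rot[OF d, unfolded wf_def])
  have "(\<lambda>z. - z / of_real d + (\<i> * of_real pi / of_real d) * (Phi (pi^2/d) \<circ> wf d) z - (Phi d \<circ> (\<lambda>z. z / 2)) z) holomorphic_on (- Lset d)"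
    by (intro holomorphic_intros h1 h2) (use d in auto)
  then show ?thesis unfolding Df_def[abs_def] Gf_def Hf_def by simp
qed

lemma filterlim_cmult_at0:
  assumes "c \<noteq> (0::complex)"
  shows "filterlim (\<lambda>z. c * z) (at 0) (at 0)"
  unfolding filterlim_at
  by (auto simp: eventually_at_filter assms intro!: always_eventually tendsto_eq_intros)

lemma Df_lim0:
  assumes d: "d > 0"
  shows "((\<lambda>z. z * Df d z) \<longlongrightarrow> 0) (at 0)"
proof -
  have T: "pi^2/d > 0" using d by simp
  have f1: "filterlim (\<lambda>z. (1/2) * z) (at 0) (at (0::complex))" by (rule filterlim_cmult_at0) simp
  have f2: "filterlim (\<lambda>z. (\<i> * of_real pi / (2 * of_real d)) * z) (at 0) (at (0::complex))"
    by (rule filterlim_cmult_at0) (use d in simp)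
  have h1: "((\<lambda>z. ((1/2) * z) * Phi d ((1/2) * z)) \<longlongrightarrow> 1) (at 0)"
    using filterlim_compose[OF u_Phi_lim[OF d] f1] by simp
  have h2: "((\<lambda>z. ((\<i> * of_real pi / (2 * of_real d)) * z) * Phi (pi^2/d) ((\<i> * of_real pi / (2 * of_real d)) * z)) \<longlongrightarrow> 1) (at 0)"
    using filterlim_compose[OF u_Phi_lim[OF T] f2] by simp
  have "((\<lambda>z. - (z * z) / of_real d + 2 * (((\<i> * of_real pi / (2 * of_real d)) * z) * Phi (pi^2/d) ((\<i> * of_real pi / (2 * of_real d)) * z))
      - 2 * (((1/2) * z) * Phi d ((1/2) * z))) \<longlongrightarrow> - (0 * 0) / of_real d + 2 * 1 - 2 * 1) (at 0)"
    by (intro tendsto_intros h1 h2) (use d in auto)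
  moreover have "- (z * z) / of_real d + 2 * (((\<i> * of_real pi / (2 * of_real d)) * z) * Phi (pi^2/d) ((\<i> * of_real pi / (2 * of_real d)) * z))
      - 2 * (((1/2) * z) * Phi d ((1/2) * z)) = z * Df d z" for z
  proof -
    have a: "(\<i> * of_real pi / (2 * of_real d)) * z = wf d z" unfolding wf_def by simp
    have c: "z * (\<i> * of_real pi / of_real d) = 2 * wf d z" unfolding wf_def by simp
    have b: "(1/2) * z = z / 2" by simp
    have "z * Df d z = - (z * z) / of_real d + (z * (\<i> * of_real pi / of_real d)) * Phi (pi^2/d) (wf d z) - 2 * ((z / 2) * Phi d (z / 2))"
      unfolding Df_def Gf_def Hf_def by (simp add: algebra_simps)
    then show ?thesis unfolding a b c by (simp add: algebra_simps)
  qed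
  ultimately show ?thesis by simp
qed

lemma int_period:
  fixes f :: "complex \<Rightarrow> complex" and S :: "complex set"
  assumes S: "\<And>z. z + a \<in> S \<longleftrightarrow> z \<in> S" and f: "\<And>z. z \<notin> S \<Longrightarrow> f (z + a) = f z"
  shows "\<forall>z. (z + of_int m * a \<in> S \<longleftrightarrow> z \<in> S) \<and> (z \<notin> S \<longrightarrow> f (z + of_int m * a) = f z)"
proof (induction m rule: int_induct[where k = 0])
  case base
  then show ?case by simp
next
  case (step1 i)
  show ?case
  proof (intro allI conjI impI)
    fix z
    have e: "z + of_int (i + 1) * a = (z + of_int i * a) + a" by (simp add: algebra_simps)
    show "z + of_int (i + 1) * a \<in> S \<longleftrightarrow> z \<in> S" unfolding e S using step1.IH by blast
    assume "z \<notin> S"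
    then have "z + of_int i * a \<notin> S" using step1.IH by blast
    then show "f (z + of_int (i + 1) * a) = f z" unfolding e using f step1.IH \<open>z \<notin> S\<close> by metis
  qed
next
  case (step2 i)
  show ?case
  proof (intro allI conjI impI)
    fix z
    have e: "z + of_int i * a = (z + of_int (i - 1) * a) + a" by (simp add: algebra_simps)
    show "z + of_int (i - 1) * a \<in> S \<longleftrightarrow> z \<in> S" using step2.IH S e by metis
    assume "z \<notin> S"
    then have "z + of_int (i - 1) * a \<notin> S" using step2.IH S e by metis
    then show "f (z + of_int (i - 1) * a) = f z" using f step2.IH \<open>z \<notin> S\<close> e by metis
  qed
qed

lemma Df_period:
  assumes d: "d > 0"
  shows "(z + of_int m * (2 * of_real pi) + of_int k * (2 * \<i> * of_real d) \<in> Lset d \<longleftrightarrow> z \<in> Lset d)"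
    and "z \<notin> Lset d \<Longrightarrow> Df d (z + of_int m * (2 * of_real pi) + of_int k * (2 * \<i> * of_real d)) = Df d z"
proof -
  have A: "\<forall>z. (z + of_int m * (2 * of_real pi) \<in> Lset d \<longleftrightarrow> z \<in> Lset d) \<and>
      (z \<notin> Lset d \<longrightarrow> Df d (z + of_int m * (2 * of_real pi)) = Df d z)"
    by (rule int_period) (use L_2pi Df_2pi[OF d] in auto)
  have B: "\<forall>z. (z + of_int k * (2 * \<i> * of_real d) \<in> Lset d \<longleftrightarrow> z \<in> Lset d) \<and>
      (z \<notin> Lset d \<longrightarrow> Df d (z + of_int k * (2 * \<i> * of_real d)) = Df d z)"
    by (rule int_period) (use L_2id Df_2id[OF d] in auto)
  show "(z + of_int m * (2 * of_real pi) + of_int k * (2 * \<i> * of_real d) \<in> Lset d \<longleftrightarrow> z \<in> Lset d)"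
    using A B by blast
  show "z \<notin> Lset d \<Longrightarrow> Df d (z + of_int m * (2 * of_real pi) + of_int k * (2 * \<i> * of_real d)) = Df d z"
    using A B by metis
qed

lemma reduce_real:
  fixes x p :: real
  assumes p: "p > 0"
  shows "\<exists>m::int. \<bar>x + of_int m * (2 * p)\<bar> \<le> p"
proof -
  define F where "F = \<lfloor>x / (2*p) + 1/2\<rfloor>"
  have f1: "of_int F \<le> x / (2*p) + 1/2" "x / (2*p) + 1/2 < of_int F + 1"
    unfolding F_def by linarith+
  have g1: "2 * p * of_int F \<le> x + p"
  proof -
    have "2 * p * of_int F \<le> 2 * p * (x / (2*p) + 1/2)" using f1 p by (intro mult_left_mono) auto
    also have "\<dots> = x + p" using p by (simp add: field_simps)
    finally show ?thesis .
  qed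
  have g2: "x + p < 2 * p * of_int F + 2 * p"
  proof -
    have "2 * p * (x / (2*p) + 1/2) < 2 * p * (of_int F + 1)" using f1 p by (intro mult_strict_left_mono) auto
    moreover have "2 * p * (x / (2*p) + 1/2) = x + p" using p by (simp add: field_simps)
    ultimately show ?thesis by (simp add: algebra_simps)
  qed
  have "\<bar>x + of_int (- F) * (2 * p)\<bar> \<le> p" using g1 g2 by (simp add: algebra_simps abs_le_iff)
  then show ?thesis by blast
qed

lemma reduce:
  assumes d: "d > 0"
  shows "\<exists>m k::int. z + of_int m * (2 * of_real pi) + of_int k * (2 * \<i> * of_real d) \<in> cball 0 (pi + d)"
proof -
  obtain m :: int where m: "\<bar>Re z + of_int m * (2 * pi)\<bar> \<le> pi" using reduce_real[OF pi_gt_zero] by blast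
  obtain k :: int where k: "\<bar>Im z + of_int k * (2 * d)\<bar> \<le> d" using reduce_real[OF d] by blast
  define z' where "z' = z + of_int m * (2 * of_real pi) + of_int k * (2 * \<i> * of_real d)"
  have "Re z' = Re z + of_int m * (2 * pi)" "Im z' = Im z + of_int k * (2 * d)"
    unfolding z'_def by simp_all
  then have "norm z' \<le> pi + d" using cmod_le[of z'] m k by linarith
  then show ?thesis unfolding z'_def by (intro exI[of _ m] exI[of _ k]) auto
qed

lemma L_norm:
  assumes d: "d > 0" and z: "z \<in> Lset d" "z \<noteq> 0"
  shows "norm z \<ge> min (2*pi) (2*d)"
proof -
  obtain m k :: int where zz: "z = of_real (of_int m * (2*pi)) + \<i> * of_real (of_int k * (2*d))"
    using z unfolding Lset_def by blast
  show ?thesis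
  proof (cases "k = 0")
    case True
    then have "m \<noteq> 0" using z zz by auto
    then have "1 \<le> \<bar>real_of_int m\<bar>" by linarith
    then have "2*pi \<le> \<bar>real_of_int m\<bar> * (2*pi)" by simp
    also have "\<dots> = \<bar>Re z\<bar>" using zz True by (simp add: abs_mult)
    also have "\<dots> \<le> norm z" by (rule abs_Re_le_cmod)
    finally show ?thesis by simp
  next
    case False
    then have "1 \<le> \<bar>real_of_int k\<bar>" by linarith
    then have "2*d \<le> \<bar>real_of_int k\<bar> * (2*d)" using d by simp
    also have "\<dots> = \<bar>Im z\<bar>" using zz d by (simp add: abs_mult)
    also have "\<dots> \<le> norm z" by (rule abs_Im_le_cmod)
    finally show ?thesis by simp
  qed
qed

lemma pi2_notin: "of_real (pi/2) \<notin> Lset d"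
proof
  assume "of_real (pi/2) \<in> Lset d"
  then obtain m k :: int where zz: "of_real (pi/2) = of_real (of_int m * (2*pi)) + \<i> * of_real (of_int k * (2*d))"
    unfolding Lset_def by blast
  then have "pi/2 = of_int m * (2*pi)" using arg_cong[OF zz, of Re] by simp
  then have "1 = real_of_int (4 * m)" by (simp add: field_simps)
  then have "4 * m = 1" by linarith
  then show False by presburger
qed


lemma L_closed:
  assumes "d > 0"
  shows "closed (Lset d)"
proof -
  have "Lset d = (\<lambda>z. z / 2) -` latt d" using L_half by auto
  moreover have "closed ((\<lambda>z::complex. z / 2) -` latt d)"
    by (rule continuous_closed_vimage[OF latt_closed[OF assms]]) (auto intro!: continuous_intros)
  ultimately show ?thesis by simp
qed

lemma L_diff: "z \<in> Lset d \<Longrightarrow> w \<in> Lset d \<Longrightarrow> z - w \<in> Lset d"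
proof -
  assume "z \<in> Lset d" "w \<in> Lset d"
  then have "z / 2 \<in> latt d" "- w / 2 \<in> latt d" using L_half L_uminus by blast+
  then have "z / 2 + (- w / 2) \<in> latt d" by (rule latt_add_mem)
  moreover have e: "(z - w) / 2 = z / 2 + (- w / 2)" by (simp add: field_simps)
  ultimately show ?thesis unfolding L_half e by simp
qed

lemma L_zero: "0 \<in> Lset d"
  unfolding Lset_def by (rule CollectI, rule exI[of _ 0], rule exI[of _ 0]) simp

lemma L_repr:
  assumes "w \<in> Lset d"
  shows "\<exists>m k::int. w = of_int m * (2 * of_real pi) + of_int k * (2 * \<i> * of_real d)"
proof -
  obtain m k :: int where "w = of_real (of_int m * (2*pi)) + \<i> * of_real (of_int k * (2*d))"
    using assms unfolding Lset_def by blast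
  then have "w = of_int m * (2 * of_real pi) + of_int k * (2 * \<i> * of_real d)" by simp
  then show ?thesis by blast
qed

lemma Df_zero:
  assumes d: "d > 0"
  shows "Df d (of_real (pi/2)) = 0"
proof -
  define r where "r = min pi d"
  have r: "r > 0" unfolding r_def using d by simp
  have ball_L: "z \<notin> Lset d" if w: "w \<in> Lset d" and z: "z \<in> ball w r" "z \<noteq> w" for w z
  proof
    assume "z \<in> Lset d"
    then have "z - w \<in> Lset d" using w L_diff by blast
    then have "norm (z - w) \<ge> min (2*pi) (2*d)" using L_norm[OF d] z by auto
    then have A: "2*pi \<le> norm (z - w) \<or> 2*d \<le> norm (z - w)" by (simp add: min_le_iff_disj)
    have "norm (z - w) < r" using z by (simp add: dist_norm norm_minus_commute)
    then have B: "norm (z - w) < pi" "norm (z - w) < d" unfolding r_def by auto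
    have p: "pi > 0" by (rule pi_gt_zero)
    from A show False using B p d by (elim disjE) linarith+
  qed
  have hol0: "Df d holomorphic_on (ball 0 r - {0})"
    by (rule holomorphic_on_subset[OF Df_holo[OF d]]) (use ball_L[OF L_zero] in auto)
  have int0: "(0::complex) \<in> interior (ball 0 r)" using r by simp
  have "((\<lambda>z. (z - 0) * Df d z) \<longlongrightarrow> 0) (at 0)" using Df_lim0[OF d] by simp
  then obtain g where g: "g holomorphic_on ball 0 r" "\<forall>z\<in>ball 0 r - {0}. g z = Df d z"
    using holomorphic_on_extend_lim[OF hol0 int0] by blast
  define c where "c = g 0"
  have lim0: "(Df d \<longlongrightarrow> c) (at 0)"
  proof -
    have "continuous_on (ball 0 r) g" using g(1) holomorphic_on_imp_continuous_on by blast
    moreover have "0 \<in> ball (0::complex) r" using r by simp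
    ultimately have "isCont g 0" using continuous_on_eq_continuous_at[OF open_ball] by blast
    then have "(g \<longlongrightarrow> c) (at 0)" unfolding c_def isCont_def .
    moreover have "\<forall>\<^sub>F z in at 0. g z = Df d z"
      unfolding eventually_at using r g(2) by (intro exI[of _ r]) (auto simp: dist_norm)
    ultimately show ?thesis by (rule Lim_transform_eventually)
  qed
  have limw: "(Df d \<longlongrightarrow> c) (at w)" if w: "w \<in> Lset d" for w
  proof -
    obtain m k :: int where wr: "w = of_int m * (2 * of_real pi) + of_int k * (2 * \<i> * of_real d)"
      using L_repr[OF w] by blast
    have fl: "filterlim (\<lambda>z. z - w) (at 0) (at w)"
      unfolding filterlim_at
      by (auto simp: eventually_at_filter intro!: always_eventually tendsto_eq_intros)
    have "((\<lambda>z. Df d (z - w)) \<longlongrightarrow> c) (at w)" by (rule filterlim_compose[OF lim0 fl])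
    moreover have "\<forall>\<^sub>F z in at w. Df d (z - w) = Df d z"
      unfolding eventually_at
    proof (intro exI[of _ r] conjI ballI impI)
      fix z assume z: "z \<noteq> w \<and> dist z w < r"
      then have zL: "z \<notin> Lset d" using ball_L[OF w, of z] by (auto simp: dist_commute)
      have "z - w \<notin> Lset d"
      proof
        assume "z - w \<in> Lset d"
        then have "z - w + w \<in> Lset d" using w L_diff[of "z - w" d "- w"] L_uminus by auto
        then show False using zL by simp
      qed
      then have "Df d ((z - w) + of_int m * (2 * of_real pi) + of_int k * (2 * \<i> * of_real d)) = Df d (z - w)"
        by (rule Df_period(2)[OF d])
      moreover have "(z - w) + of_int m * (2 * of_real pi) + of_int k * (2 * \<i> * of_real d) = z"
        unfolding wr by simp
      ultimately show "Df d (z - w) = Df d z" by simp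
    qed (use r in auto)
    ultimately show ?thesis by (rule Lim_transform_eventually)
  qed
  define E where "E z = (if z \<in> Lset d then c else Df d z)" for z
  have "E analytic_on UNIV"
    unfolding analytic_on_def
  proof
    fix x :: complex
    show "\<exists>e>0. E holomorphic_on ball x e"
    proof (cases "x \<in> Lset d")
      case True
      have "Df d holomorphic_on (ball x r - {x})"
        by (rule holomorphic_on_subset[OF Df_holo[OF d]]) (use ball_L[OF True] in auto)
      then have "(\<lambda>y. if y = x then c else Df d y) holomorphic_on ball x r"
        by (rule removable_singularity[OF _ open_ball limw[OF True]])
      moreover have "\<And>y. y \<in> ball x r \<Longrightarrow> (if y = x then c else Df d y) = E y"
        unfolding E_def using ball_L[OF True] True by auto
      ultimately have "E holomorphic_on ball x r" by (rule holomorphic_transform)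
      then show ?thesis using r by blast
    next
      case False
      have "open (- Lset d)" using L_closed[OF d] by auto
      then obtain e where e: "e > 0" "ball x e \<subseteq> - Lset d"
        using False open_contains_ball by blast
      have "Df d holomorphic_on ball x e" by (rule holomorphic_on_subset[OF Df_holo[OF d] e(2)])
      moreover have "\<And>y. y \<in> ball x e \<Longrightarrow> Df d y = E y" unfolding E_def using e(2) by auto
      ultimately have "E holomorphic_on ball x e" by (rule holomorphic_transform)
      then show ?thesis using e by blast
    qed
  qed
  then have holE: "E holomorphic_on UNIV" by (rule analytic_imp_holomorphic)
  have "range E \<subseteq> E ` cball 0 (pi + d)"
  proof
    fix y assume "y \<in> range E"
    then obtain z where y: "y = E z" by blast
    obtain m k :: int where mk: "z + of_int m * (2 * of_real pi) + of_int k * (2 * \<i> * of_real d) \<in> cball 0 (pi + d)"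
      using reduce[OF d] by blast
    have "E (z + of_int m * (2 * of_real pi) + of_int k * (2 * \<i> * of_real d)) = E z"
      unfolding E_def using Df_period[OF d, of z m k] by auto
    then show "y \<in> E ` cball 0 (pi + d)" using mk y by (metis image_eqI)
  qed
  moreover have "compact (E ` cball 0 (pi + d))"
    by (rule compact_continuous_image[OF _ compact_cball])
       (rule holomorphic_on_imp_continuous_on[OF holomorphic_on_subset[OF holE]], simp)
  ultimately have "bounded (range E)" using compact_imp_bounded bounded_subset by blast
  then have "E constant_on UNIV" by (rule Liouville_theorem[OF holE])
  then obtain y where y: "\<And>x. E x = y" unfolding constant_on_def by blast
  have p1: "of_real (pi/2) \<notin> Lset d" by (rule pi2_notin)
  have p2: "- of_real (pi/2) \<notin> Lset d" using p1 L_uminus by blast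
  have "Df d (of_real (pi/2)) = E (of_real (pi/2))" unfolding E_def using p1 by simp
  also have "\<dots> = E (- of_real (pi/2))" using y by simp
  also have "\<dots> = Df d (- of_real (pi/2))" unfolding E_def using p2 by simp
  also have "\<dots> = - Df d (of_real (pi/2))" by (rule Df_uminus[OF d p1])
  finally show ?thesis by simp
qed



lemma exp_m_cplx: "exp (- complex_of_real x) = of_real (exp (-x))"
  by (metis exp_of_real of_real_minus)

lemma sinh_cplx: "sinh (complex_of_real x) = of_real (sinh x)"
  by (simp add: sinh_def scaleR_conv_of_real exp_of_real exp_m_cplx)

lemma cosh_cplx: "cosh (complex_of_real x) = of_real (cosh x)"
  by (simp add: cosh_def scaleR_conv_of_real exp_of_real exp_m_cplx)

lemma cot_i_real: "cot (\<i> * complex_of_real x) = - \<i> * of_real (coth x)"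
proof -
  have s: "sin (\<i> * complex_of_real x) = \<i> * of_real (sinh x)"
    using sinh_conv_sin[of "complex_of_real x"] unfolding sinh_cplx by simp
  have c: "cos (\<i> * complex_of_real x) = of_real (cosh x)"
    using cosh_conv_cos[of "complex_of_real x"] unfolding cosh_cplx by simp
  show ?thesis
  proof (cases "sinh x = 0")
    case True
    then show ?thesis unfolding cot_def s c coth_def by simp
  next
    case False
    then show ?thesis unfolding cot_def s c coth_def by (simp add: field_simps)
  qed
qed

lemma coth_pair:
  fixes P Q :: real
  assumes "sinh P \<noteq> 0" "sinh Q \<noteq> 0"
  shows "coth P + coth Q = 2 * sinh (P + Q) / (cosh (P + Q) - cosh (P - Q))"
proof -
  have den: "cosh (P + Q) - cosh (P - Q) = 2 * sinh P * sinh Q"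
    unfolding cosh_add cosh_diff by simp
  show ?thesis unfolding den coth_def sinh_add using assms by (simp add: field_simps)
qed

lemma cot_sum_quarter:
  fixes Y :: real
  assumes "sin (of_real (pi/4) + \<i> * of_real Y) \<noteq> 0" "sin (of_real (pi/4) - \<i> * of_real Y) \<noteq> 0"
  shows "Re (cot (of_real (pi/4) + \<i> * of_real Y) + cot (of_real (pi/4) - \<i> * of_real Y)) \<ge> 0"
proof -
  define a where "a = of_real (pi/4) + \<i> * of_real Y"
  have b: "of_real (pi/4) - \<i> * of_real Y = cnj a" unfolding a_def by (simp add: complex_eq_iff)
  have sa: "sin a \<noteq> 0" using assms(1) a_def by simp
  have sb: "sin (cnj a) \<noteq> 0" using assms(2) b by simp
  have ab: "a + cnj a = of_real (pi/2)" unfolding a_def by (simp add: complex_eq_iff)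
  have "cot a + cot (cnj a) = sin (a + cnj a) / (sin a * sin (cnj a))"
    unfolding cot_def sin_add using sa sb by (simp add: field_simps)
  also have "sin (a + cnj a) = 1" unfolding ab sin_of_real by simp
  also have "sin (cnj a) = cnj (sin a)" by (simp add: cnj_sin)
  also have "sin a * cnj (sin a) = of_real ((Re (sin a))\<^sup>2 + (Im (sin a))\<^sup>2)" by (rule complex_mult_cnj)
  finally have "cot a + cot (cnj a) = 1 / of_real ((Re (sin a))\<^sup>2 + (Im (sin a))\<^sup>2)" .
  then show ?thesis unfolding a_def[symmetric] b by simp
qed


lemma H_side:
  assumes d: "d > 0"
  shows "Re (Hf d (complex_of_real (pi/2))) \<ge> 1"
proof -
  define u0 where "u0 = complex_of_real (pi/4)"
  have hz: "Hf d (complex_of_real (pi/2)) = Phi d u0" unfolding Hf_def u0_def by simp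
  have u0L: "u0 \<notin> latt d"
  proof
    assume "u0 \<in> latt d"
    then obtain m k :: int where zz: "u0 = of_real (of_int m * pi) + \<i> * of_real (of_int k * d)"
      unfolding latt_def by blast
    then have "pi/4 = of_int m * pi" using arg_cong[OF zz, of Re] unfolding u0_def by simp
    then have "1 = real_of_int (4 * m)" by (simp add: field_simps)
    then have "4 * m = 1" by linarith
    then show False by presburger
  qed
  have summ: "summable (pt d u0)" by (rule Phi_holo(2)[OF d u0L])
  have "Re (Phi d u0) = Re (cot u0) + (\<Sum>n. Re (pt d u0 n))"
    unfolding Phi_def using Re_suminf[OF summ] by simp
  moreover have "cot u0 = 1"
  proof -
    have "cot (pi/4) = (1::real)" unfolding cot_def sin_45 cos_45 by simp
    then show ?thesis unfolding u0_def cot_of_real[symmetric] by simp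
  qed
  moreover have "(\<Sum>n. Re (pt d u0 n)) \<ge> 0"
  proof (rule suminf_nonneg)
    show "summable (\<lambda>n. Re (pt d u0 n))" using summable_Re[OF summ] .
    fix n
    show "0 \<le> Re (pt d u0 n)" unfolding pt_def u0_def
      by (rule cot_sum_quarter) (use sin_plus_nz[OF u0L, of "Suc n"] sin_minus_nz[OF u0L, of "Suc n"] u0_def in auto)
  qed
  ultimately show ?thesis unfolding hz by simp
qed

lemma G_term:
  assumes d: "d > 0"
  shows "Re ((\<i> * of_real pi / of_real d) * pt (pi^2/d) (\<i> * of_real (pi * (pi/2) / (2*d))) n)
    = (pi / d) * (2 * sinh (pi * (pi / 2) / d) / (cosh (pi * (pi / 2) / d) - cosh (2 * pi^2 * real (Suc n) / d)))"
proof -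
  define A where "A = pi * (pi/2) / (2*d)"
  define Y where "Y = real (Suc n) * (pi^2/d)"
  have a1: "\<i> * of_real A + \<i> * of_real Y = \<i> * of_real (A + Y)" by (simp add: algebra_simps)
  have a2: "\<i> * of_real A - \<i> * of_real Y = \<i> * of_real (A - Y)" by (simp add: algebra_simps)
  have pt_eq: "pt (pi^2/d) (\<i> * of_real A) n = - \<i> * of_real (coth (A + Y) + coth (A - Y))"
    unfolding pt_def Y_def[symmetric] a1 a2 cot_i_real by (simp add: algebra_simps)
  have eq: "(\<i> * of_real pi / of_real d) * pt (pi^2/d) (\<i> * of_real A) n = of_real (pi / d * (coth (A + Y) + coth (A - Y)))"
    unfolding pt_eq by (simp add: field_simps)
  have r: "Re ((\<i> * of_real pi / of_real d) * pt (pi^2/d) (\<i> * of_real A) n) = pi / d * (coth (A + Y) + coth (A - Y))"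
    by (simp only: eq Re_complex_of_real)
  have A0: "A > 0" unfolding A_def using d by simp
  have AY: "A < Y"
  proof -
    have "A = pi^2 / (4*d)" unfolding A_def by (simp add: power2_eq_square)
    also have "\<dots> < pi^2 / d" using d by (simp add: field_simps)
    also have "\<dots> \<le> Y"
    proof -
      have "1 * (pi^2/d) \<le> real (Suc n) * (pi^2/d)" using d by (intro mult_right_mono) auto
      then show ?thesis unfolding Y_def by simp
    qed
    finally show ?thesis .
  qed
  have s1: "sinh (A + Y) \<noteq> 0" using A0 AY by simp
  have s2: "sinh (A - Y) \<noteq> 0" using AY by simp
  have e1: "(A + Y) + (A - Y) = pi * (pi / 2) / d" unfolding A_def by simp
  have e2: "(A + Y) - (A - Y) = 2 * pi^2 * real (Suc n) / d" unfolding Y_def by simp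
  have "Re ((\<i> * of_real pi / of_real d) * pt (pi^2/d) (\<i> * of_real A) n) =
      pi / d * (2 * sinh ((A + Y) + (A - Y)) / (cosh ((A + Y) + (A - Y)) - cosh ((A + Y) - (A - Y))))"
    by (simp only: r coth_pair[OF s1 s2])
  then have "Re ((\<i> * of_real pi / of_real d) * pt (pi^2/d) (\<i> * of_real A) n) =
      pi / d * (2 * sinh (pi * (pi / 2) / d) / (cosh (pi * (pi / 2) / d) - cosh (2 * pi^2 * real (Suc n) / d)))"
    unfolding e1 e2 .
  then show ?thesis unfolding A_def .
qed

theorem theorem1:
  fixes d :: real
  assumes "d > 0"
  shows "beta d (pi / 2) \<ge> 1"
proof -
  have d: "d > 0" by fact
  define z0 where "z0 = complex_of_real (pi/2)"
  define A where "A = pi * (pi/2) / (2*d)"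
  define c where "c = \<i> * of_real pi / of_real d"
  define t where "t n = 2 * sinh (pi * (pi / 2) / d) / (cosh (pi * (pi / 2) / d) - cosh (2 * pi^2 * real (Suc n) / d))" for n
  have GH: "Gf d z0 = Hf d z0" using Df_zero[OF d] unfolding Df_def z0_def by simp
  have wz: "wf d z0 = \<i> * of_real A" unfolding wf_def z0_def A_def by simp
  have "wf d z0 \<notin> latt (pi^2/d)"
    using pi2_notin[of d] L_rot[OF d, of z0] unfolding z0_def by blast
  then have w0L: "\<i> * of_real A \<notin> latt (pi^2/d)" unfolding wz .
  have T2: "pi^2/d > 0" using d by simp
  have summG: "summable (pt (pi^2/d) (\<i> * of_real A))" by (rule Phi_holo(2)[OF T2 w0L])
  have summc: "summable (\<lambda>n. c * pt (pi^2/d) (\<i> * of_real A) n)" by (rule summable_mult[OF summG])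
  have tm: "Re (c * pt (pi^2/d) (\<i> * of_real A) n) = (pi / d) * t n" for n
    unfolding c_def A_def t_def by (rule G_term[OF d])
  have summt': "summable (\<lambda>n. (pi / d) * t n)" using summable_Re[OF summc] unfolding tm .
  then have summt: "summable t" using d by simp
  have "Gf d z0 = - z0 / of_real d + c * cot (\<i> * of_real A) + (\<Sum>n. c * pt (pi^2/d) (\<i> * of_real A) n)"
    unfolding Gf_def wz Phi_def c_def[symmetric] suminf_mult[OF summG] by (simp add: algebra_simps)
  then have "Re (Gf d z0) = - (pi/2) / d + Re (c * cot (\<i> * of_real A)) + (\<Sum>n. Re (c * pt (pi^2/d) (\<i> * of_real A) n))"
    using Re_suminf[OF summc] unfolding z0_def by simp
  also have "Re (c * cot (\<i> * of_real A)) = pi / d * coth A"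
    unfolding c_def cot_i_real by simp
  also have "(\<Sum>n. Re (c * pt (pi^2/d) (\<i> * of_real A) n)) = (\<Sum>n. (pi / d) * t n)"
    unfolding tm ..
  also have "\<dots> = (pi / d) * (\<Sum>n. t n)" by (rule suminf_mult[OF summt])
  finally have "Re (Gf d z0) = beta d (pi / 2)"
    unfolding beta_def t_def A_def by simp
  then show ?thesis using H_side[OF d] GH unfolding z0_def by simp
qed

end
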